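(* Every WHB-algebra $\mathbf A$ is isomorphic to a subalgebra of $\mathcal A(\mathcal F(\mathbf A))=(\mathrm{Up}(X(\mathbf A)),\cap,\cup,\Rightarrow_{R_{\mathbf A}},\Leftarrow_{S_{\mathbf A}},\emptyset,X(\mathbf A))$.
   Context: A WHB-algebra is an algebra $(A,\wedge,\vee,\to,\leftarrow,0,1)$ such that $(A,\wedge,\vee,0,1)$ is a bounded distributive lattice and for all $a,b,c\in A$: $a\to a=1$; $a\to(b\wedge c)=(a\to b)\wedge(a\to c)$; $(a\vee b)\to c=(a\to c)\wedge(b\to c)$; $(a\to b)\wedge(b\to c)\le a\to c$; $a\leftarrow a=0$; $(a\vee b)\leftarrow c=(a\leftarrow c)\vee(b\leftarrow c)$; $a\leftarrow(b\wedge c)=(a\leftarrow b)\vee(a\leftarrow c)$; $a\leftarrow c\le(a\leftarrow b)\vee(b\leftarrow c)$; $a\wedge((a\to b)\leftarrow 0)\le b$; $a\le b\vee(1\to(a\leftarrow b))$. $X(\mathbf A)$ is the set of prime filters of $\mathbf A$, ordered by inclusion; $\mathrm{Up}(X(\mathbf A))$ is the set of its upsets. $(P,Q)\in R_{\mathbf A}$ iff for all $a,b$, $a\to b\in P$ and $a\in Q$ imply $b\in Q$; $(P,Q)\in S_{\mathbf A}$ iff for all $a,b$, $a\in Q$ and $b\notin Q$ imply $a\leftarrow b\in P$. $\mathcal F(\mathbf A)=(X(\mathbf A),\subseteq,R_{\mathbf A},S_{\mathbf A})$. For upsets $U,V$: $U\Rightarrow_R V=\{x\colon R(x)\cap U\subseteq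 V\}$ and $U\Leftarrow_S V=\{x\colon S(x)\cap(U\setminus V)\neq\emptyset\}$, where $\mathcal R(x)=\{y\colon(x,y)\in\mathcal R\}$. *)

theory Defs
  imports Main
begin

record 'a whb =
  wcar :: "'a set"
  wmeet :: "'a \<Rightarrow> 'a \<Rightarrow> 'a"
  wjoin :: "'a \<Rightarrow> 'a \<Rightarrow> 'a"
  wimp :: "'a \<Rightarrow> 'a \<Rightarrow> 'a"
  wcoimp :: "'a \<Rightarrow> 'a \<Rightarrow> 'a"
  wbot :: "'a"
  wtop :: "'a"

definition wle :: "'a whb \<Rightarrow> 'a \<Rightarrow> 'a \<Rightarrow> bool" where
  "wle A a b \<longleftrightarrow> wmeet A a b = a"

definition bdl :: "'a whb \<Rightarrow> bool" where
  "bdl A \<longleftrightarrow>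
    wbot A \<in> wcar A \<and> wtop A \<in> wcar A \<and>
    (\<forall>a\<in>wcar A. \<forall>b\<in>wcar A. wmeet A a b \<in> wcar A \<and> wjoin A a b \<in> wcar A) \<and>
    (\<forall>a\<in>wcar A. \<forall>b\<in>wcar A.
        wmeet A a b = wmeet A b a \<and> wjoin A a b = wjoin A b a \<and>
        wmeet A a (wjoin A a b) = a \<and> wjoin A a (wmeet A a b) = a) \<and>
    (\<forall>a\<in>wcar A. \<forall>b\<in>wcar A. \<forall>c\<in>wcar A.
        wmeet A a (wmeet A b c) = wmeet A (wmeet A a b) c \<and>
        wjoin A a (wjoin A b c) = wjoin A (wjoin A a b) c \<and>
        wmeet A a (wjoin A b c) = wjoin A (wmeet A a b) (wmeet A a c)) \<and>
    (\<forall>a\<in>wcar A. wjoin A a (wbot A) = a \<and> wmeet A a (wtop A) = a)"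

definition whb_algebra :: "'a whb \<Rightarrow> bool" where
  "whb_algebra A \<longleftrightarrow> bdl A \<and>
    (\<forall>a\<in>wcar A. \<forall>b\<in>wcar A. wimp A a b \<in> wcar A \<and> wcoimp A a b \<in> wcar A) \<and>
    (\<forall>a\<in>wcar A. wimp A a a = wtop A \<and> wcoimp A a a = wbot A) \<and>
    (\<forall>a\<in>wcar A. \<forall>b\<in>wcar A. \<forall>c\<in>wcar A.
        wimp A a (wmeet A b c) = wmeet A (wimp A a b) (wimp A a c) \<and>
        wimp A (wjoin A a b) c = wmeet A (wimp A a c) (wimp A b c) \<and>
        wle A (wmeet A (wimp A a b) (wimp A b c)) (wimp A a c) \<and>
        wcoimp A (wjoin A a b) c = wjoin A (wcoimp A a c) (wcoimp A b c) \<and>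
        wcoimp A a (wmeet A b c) = wjoin A (wcoimp A a b) (wcoimp A a c) \<and>
        wle A (wcoimp A a c) (wjoin A (wcoimp A a b) (wcoimp A b c))) \<and>
    (\<forall>a\<in>wcar A. \<forall>b\<in>wcar A.
        wle A (wmeet A a (wcoimp A (wimp A a b) (wbot A))) b \<and>
        wle A a (wjoin A b (wimp A (wtop A) (wcoimp A a b))))"

definition prime_filter :: "'a whb \<Rightarrow> 'a set \<Rightarrow> bool" where
  "prime_filter A P \<longleftrightarrow> P \<subseteq> wcar A \<and> wtop A \<in> P \<and> wbot A \<notin> P \<and>
    (\<forall>a\<in>P. \<forall>b\<in>wcar A. wle A a b \<longrightarrow> b \<in> P) \<and>
    (\<forall>a\<in>P. \<forall>b\<in>P. wmeet A a b \<in> P) \<and>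
    (\<forall>a\<in>wcar A. \<forall>b\<in>wcar A. wjoin A a b \<in> P \<longrightarrow> a \<in> P \<or> b \<in> P)"

definition Xp :: "'a whb \<Rightarrow> 'a set set" where
  "Xp A = {P. prime_filter A P}"

definition Up :: "'a whb \<Rightarrow> 'a set set set" where
  "Up A = {U. U \<subseteq> Xp A \<and> (\<forall>P\<in>U. \<forall>Q\<in>Xp A. P \<subseteq> Q \<longrightarrow> Q \<in> U)}"

definition R_A :: "'a whb \<Rightarrow> ('a set \<times> 'a set) set" where
  "R_A A = {(P, Q). P \<in> Xp A \<and> Q \<in> Xp A \<and>
     (\<forall>a\<in>wcar A. \<forall>b\<in>wcar A. wimp A a b \<in> P \<and> a \<in> Q \<longrightarrow> b \<in> Q)}"

definition S_A :: "'a whb \<Rightarrow> ('a set \<times> 'a set) set" where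
  "S_A A = {(P, Q). P \<in> Xp A \<and> Q \<in> Xp A \<and>
     (\<forall>a\<in>wcar A. \<forall>b\<in>wcar A. a \<in> Q \<and> b \<notin> Q \<longrightarrow> wcoimp A a b \<in> P)}"

definition impR :: "'a whb \<Rightarrow> 'a set set \<Rightarrow> 'a set set \<Rightarrow> 'a set set" where
  "impR A U V = {x \<in> Xp A. {y \<in> Xp A. (x, y) \<in> R_A A} \<inter> U \<subseteq> V}"

definition coimpS :: "'a whb \<Rightarrow> 'a set set \<Rightarrow> 'a set set \<Rightarrow> 'a set set" where
  "coimpS A U V = {x \<in> Xp A. {y \<in> Xp A. (x, y) \<in> S_A A} \<inter> (U - V) \<noteq> {}}"

text \<open>h embeds A into the complex algebra of its canonical frame: an injective
  homomorphism into Up(X(A)) (its image is then a subalgebra isomorphic to A).\<close>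
definition embeds_into_complex :: "'a whb \<Rightarrow> ('a \<Rightarrow> 'a set set) \<Rightarrow> bool" where
  "embeds_into_complex A h \<longleftrightarrow>
     inj_on h (wcar A) \<and> h ` wcar A \<subseteq> Up A \<and>
     h (wbot A) = {} \<and> h (wtop A) = Xp A \<and>
     (\<forall>a\<in>wcar A. \<forall>b\<in>wcar A.
        h (wmeet A a b) = h a \<inter> h b \<and>
        h (wjoin A a b) = h a \<union> h b \<and>
        h (wimp A a b) = impR A (h a) (h b) \<and>
        h (wcoimp A a b) = coimpS A (h a) (h b))"

end

theory Submission
  imports Defs
begin

locale whbl =
  fixes A :: "'a whb"
  assumes W: "whb_algebra A"
begin

abbreviation "C \<equiv> wcar A"
abbreviation "mt \<equiv> wmeet A"
abbreviation "jn \<equiv> wjoin A"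
abbreviation "im \<equiv> wimp A"
abbreviation "co \<equiv> wcoimp A"
abbreviation "bt \<equiv> wbot A"
abbreviation "tp \<equiv> wtop A"
abbreviation "le \<equiv> wle A"

lemma B: "bdl A" using W unfolding whb_algebra_def by blast

lemma bot_C: "bt \<in> C" using B unfolding bdl_def by blast
lemma top_C: "tp \<in> C" using B unfolding bdl_def by blast
lemma mt_C: "x \<in> C \<Longrightarrow> y \<in> C \<Longrightarrow> mt x y \<in> C" using B unfolding bdl_def by blast
lemma jn_C: "x \<in> C \<Longrightarrow> y \<in> C \<Longrightarrow> jn x y \<in> C" using B unfolding bdl_def by blast
lemma im_C: "x \<in> C \<Longrightarrow> y \<in> C \<Longrightarrow> im x y \<in> C" using W unfolding whb_algebra_def by blast
lemma co_C: "x \<in> C \<Longrightarrow> y \<in> C \<Longrightarrow> co x y \<in> C" using W unfolding whb_algebra_def by blast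
lemma mt_comm: "x \<in> C \<Longrightarrow> y \<in> C \<Longrightarrow> mt x y = mt y x" using B unfolding bdl_def by blast
lemma jn_comm: "x \<in> C \<Longrightarrow> y \<in> C \<Longrightarrow> jn x y = jn y x" using B unfolding bdl_def by blast
lemma abs1: "x \<in> C \<Longrightarrow> y \<in> C \<Longrightarrow> mt x (jn x y) = x" using B unfolding bdl_def by blast
lemma abs2: "x \<in> C \<Longrightarrow> y \<in> C \<Longrightarrow> jn x (mt x y) = x" using B unfolding bdl_def by blast
lemma mt_assoc: "x \<in> C \<Longrightarrow> y \<in> C \<Longrightarrow> z \<in> C \<Longrightarrow> mt x (mt y z) = mt (mt x y) z"
  using B unfolding bdl_def by blast
lemma distr: "x \<in> C \<Longrightarrow> y \<in> C \<Longrightarrow> z \<in> C \<Longrightarrow> mt x (jn y z) = jn (mt x y) (mt x z)"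
  using B unfolding bdl_def by blast
lemma jn_bot: "x \<in> C \<Longrightarrow> jn x bt = x" using B unfolding bdl_def by blast
lemma mt_top: "x \<in> C \<Longrightarrow> mt x tp = x" using B unfolding bdl_def by blast

lemma im_refl: "x \<in> C \<Longrightarrow> im x x = tp" using W unfolding whb_algebra_def by blast
lemma co_refl: "x \<in> C \<Longrightarrow> co x x = bt" using W unfolding whb_algebra_def by blast
lemma im_mt: "x \<in> C \<Longrightarrow> y \<in> C \<Longrightarrow> z \<in> C \<Longrightarrow> im x (mt y z) = mt (im x y) (im x z)"
  using W unfolding whb_algebra_def by blast
lemma im_jn: "x \<in> C \<Longrightarrow> y \<in> C \<Longrightarrow> z \<in> C \<Longrightarrow> im (jn x y) z = mt (im x z) (im y z)"
  using W unfolding whb_algebra_def by blast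
lemma im_tr: "x \<in> C \<Longrightarrow> y \<in> C \<Longrightarrow> z \<in> C \<Longrightarrow> le (mt (im x y) (im y z)) (im x z)"
  using W unfolding whb_algebra_def by blast
lemma co_jn: "x \<in> C \<Longrightarrow> y \<in> C \<Longrightarrow> z \<in> C \<Longrightarrow> co (jn x y) z = jn (co x z) (co y z)"
  using W unfolding whb_algebra_def by blast
lemma co_mt: "x \<in> C \<Longrightarrow> y \<in> C \<Longrightarrow> z \<in> C \<Longrightarrow> co x (mt y z) = jn (co x y) (co x z)"
  using W unfolding whb_algebra_def by blast
lemma co_tr: "x \<in> C \<Longrightarrow> y \<in> C \<Longrightarrow> z \<in> C \<Longrightarrow> le (co x z) (jn (co x y) (co y z))"
  using W unfolding whb_algebra_def by blast

lemma mt_idem: "x \<in> C \<Longrightarrow> mt x x = x"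
  by (metis abs1 abs2 mt_C)
lemma le_refl: "x \<in> C \<Longrightarrow> le x x" by (simp add: wle_def mt_idem)
lemma le_antisym: "x \<in> C \<Longrightarrow> y \<in> C \<Longrightarrow> le x y \<Longrightarrow> le y x \<Longrightarrow> x = y"
  by (metis wle_def mt_comm)
lemma le_trans: "x \<in> C \<Longrightarrow> y \<in> C \<Longrightarrow> z \<in> C \<Longrightarrow> le x y \<Longrightarrow> le y z \<Longrightarrow> le x z"
  by (metis wle_def mt_assoc)
lemma meet_le1: "x \<in> C \<Longrightarrow> y \<in> C \<Longrightarrow> le (mt x y) x"
  unfolding wle_def by (metis mt_assoc mt_comm mt_idem)
lemma meet_le2: "x \<in> C \<Longrightarrow> y \<in> C \<Longrightarrow> le (mt x y) y"
  unfolding wle_def by (metis mt_assoc mt_idem)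
lemma le_meetI: "x \<in> C \<Longrightarrow> y \<in> C \<Longrightarrow> z \<in> C \<Longrightarrow> le z x \<Longrightarrow> le z y \<Longrightarrow> le z (mt x y)"
  unfolding wle_def by (metis mt_assoc)
lemma le_top: "x \<in> C \<Longrightarrow> le x tp" by (simp add: wle_def mt_top)
lemma bot_le: "x \<in> C \<Longrightarrow> le bt x"
  unfolding wle_def by (metis abs1 jn_bot jn_comm bot_C)
lemma join_ge1: "x \<in> C \<Longrightarrow> y \<in> C \<Longrightarrow> le x (jn x y)" by (simp add: wle_def abs1)
lemma join_ge2: "x \<in> C \<Longrightarrow> y \<in> C \<Longrightarrow> le y (jn x y)" by (metis join_ge1 jn_comm)
lemma join_leI: "x \<in> C \<Longrightarrow> y \<in> C \<Longrightarrow> z \<in> C \<Longrightarrow> le x z \<Longrightarrow> le y z \<Longrightarrow> le (jn x y) z"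
  unfolding wle_def by (metis distr mt_comm jn_C)
lemma meet_mono: "x \<in> C \<Longrightarrow> y \<in> C \<Longrightarrow> z \<in> C \<Longrightarrow> le x y \<Longrightarrow> le (mt x z) (mt y z)"
  by (meson le_meetI le_trans meet_le1 meet_le2 mt_C)

lemma im_le_top: "x \<in> C \<Longrightarrow> y \<in> C \<Longrightarrow> le x y \<Longrightarrow> im x y = tp"
proof -
  assume a: "x \<in> C" "y \<in> C" "le x y"
  have "tp = im x (mt x y)" using a im_refl by (simp add: wle_def)
  also have "\<dots> = mt tp (im x y)" using a im_mt im_refl by simp
  also have "\<dots> = im x y" using a by (metis im_C mt_comm mt_top top_C)
  finally show ?thesis by simp
qed

lemma co_le_bot: "x \<in> C \<Longrightarrow> y \<in> C \<Longrightarrow> le x y \<Longrightarrow> co x y = bt"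
proof -
  assume a: "x \<in> C" "y \<in> C" "le x y"
  have "bt = co x (mt x y)" using a co_refl by (simp add: wle_def)
  also have "\<dots> = jn bt (co x y)" using a co_mt co_refl by simp
  also have "\<dots> = co x y" using a by (metis co_C jn_comm jn_bot bot_C)
  finally show ?thesis by simp
qed

lemma prime_ext:
  fixes T :: "'a \<Rightarrow> 'a \<Rightarrow> bool"
  assumes T1: "\<And>x y. x\<in>C \<Longrightarrow> y\<in>C \<Longrightarrow> le x y \<Longrightarrow> T x y"
    and T2: "\<And>x y z. x\<in>C \<Longrightarrow> y\<in>C \<Longrightarrow> z\<in>C \<Longrightarrow> T x y \<Longrightarrow> T y z \<Longrightarrow> T x z"
    and T3: "\<And>x y z. x\<in>C \<Longrightarrow> y\<in>C \<Longrightarrow> z\<in>C \<Longrightarrow> T x y \<Longrightarrow> T x z \<Longrightarrow> T x (mt y z)"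
    and T4: "\<And>x y z. x\<in>C \<Longrightarrow> y\<in>C \<Longrightarrow> z\<in>C \<Longrightarrow> T x z \<Longrightarrow> T y z \<Longrightarrow> T (jn x y) z"
    and ab: "a \<in> C" "b \<in> C" "\<not> T a b"
  shows "\<exists>Q. prime_filter A Q \<and> a \<in> Q \<and> b \<notin> Q \<and> (\<forall>x\<in>Q. \<forall>y\<in>C. T x y \<longrightarrow> y \<in> Q)"
proof -
  define S where "S = {G. G \<subseteq> C \<and> a \<in> G \<and> b \<notin> G \<and> (\<forall>x\<in>G. \<forall>y\<in>C. T x y \<longrightarrow> y \<in> G)
      \<and> (\<forall>x\<in>G. \<forall>y\<in>G. mt x y \<in> G)}"
  have G0: "{y\<in>C. T a y} \<in> S"
  proof -
    have "T a a" using T1 le_refl ab by blast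
    moreover have "\<forall>x\<in>{y\<in>C. T a y}. \<forall>y\<in>C. T x y \<longrightarrow> y \<in> {y\<in>C. T a y}"
      using T2 ab by blast
    moreover have "\<forall>x\<in>{y\<in>C. T a y}. \<forall>y\<in>{y\<in>C. T a y}. mt x y \<in> {y\<in>C. T a y}"
      using T3 ab mt_C by blast
    ultimately show ?thesis unfolding S_def using ab by blast
  qed
  have ch: "\<Union>CC \<in> S" if ne: "CC \<noteq> {}" "subset.chain S CC" for CC
  proof -
    have sub: "CC \<subseteq> S" and cmp: "\<forall>X\<in>CC. \<forall>Y\<in>CC. X \<subseteq> Y \<or> Y \<subseteq> X"
      using ne(2) unfolding subset.chain_def by auto
    have m: "mt x y \<in> \<Union>CC" if xy: "x \<in> \<Union>CC" "y \<in> \<Union>CC" for x y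
    proof -
      obtain X Y where XY: "X \<in> CC" "Y \<in> CC" "x \<in> X" "y \<in> Y" using xy by blast
      show ?thesis
      proof (cases "X \<subseteq> Y")
        case True
        then show ?thesis using XY sub unfolding S_def by blast
      next
        case False
        then have "Y \<subseteq> X" using cmp XY by blast
        then show ?thesis using XY sub unfolding S_def by blast
      qed
    qed
    show ?thesis using sub ne(1) m unfolding S_def by blast
  qed
  obtain M where M: "M \<in> S" and max: "\<forall>X\<in>S. M \<subseteq> X \<longrightarrow> X = M"
    using subset_Zorn_nonempty[of S] G0 ch by blast
  have MC: "M \<subseteq> C" and aM: "a \<in> M" and bM: "b \<notin> M"
    and Mcl: "\<And>x y. x\<in>M \<Longrightarrow> y\<in>C \<Longrightarrow> T x y \<Longrightarrow> y \<in> M"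
    and Mmt: "\<And>x y. x\<in>M \<Longrightarrow> y\<in>M \<Longrightarrow> mt x y \<in> M"
    using M unfolding S_def by auto
  have key: "\<exists>g\<in>M. T (mt g x) b" if x: "x \<in> C" "x \<notin> M" for x
  proof (rule ccontr)
    assume nb: "\<not> (\<exists>g\<in>M. T (mt g x) b)"
    define Mx where "Mx = {z\<in>C. \<exists>g\<in>M. T (mt g x) z}"
    have sub: "M \<subseteq> Mx"
    proof
      fix z assume "z \<in> M"
      then show "z \<in> Mx" unfolding Mx_def using MC x T1 meet_le1 mt_C by blast
    qed
    have xMx: "x \<in> Mx" unfolding Mx_def using aM MC x T1 meet_le2 mt_C by blast
    have "Mx \<in> S"
    proof -
      have "Mx \<subseteq> C" unfolding Mx_def by blast
      moreover have "a \<in> Mx" using aM sub by blast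
      moreover have "b \<notin> Mx" using nb unfolding Mx_def by blast
      moreover have "\<forall>z\<in>Mx. \<forall>w\<in>C. T z w \<longrightarrow> w \<in> Mx"
        unfolding Mx_def using T2 MC x mt_C by blast
      moreover have "\<forall>z\<in>Mx. \<forall>w\<in>Mx. mt z w \<in> Mx"
      proof (intro ballI)
        fix z w assume "z \<in> Mx" "w \<in> Mx"
        then obtain g g' where gg: "g \<in> M" "g' \<in> M" "T (mt g x) z" "T (mt g' x) w" "z \<in> C" "w \<in> C"
          unfolding Mx_def by blast
        have gC: "g \<in> C" "g' \<in> C" using gg MC by auto
        let ?h = "mt g g'"
        have hM: "?h \<in> M" using gg Mmt by blast
        have hC: "?h \<in> C" using gC mt_C by blast
        have "le ?h g" using meet_le1 gC by blast
        then have "le (mt ?h x) (mt g x)" using meet_mono hC gC x by blast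
        then have "T (mt ?h x) (mt g x)" using T1 mt_C hC gC x by blast
        then have 1: "T (mt ?h x) z" using T2[of "mt ?h x" "mt g x" z] gg gC hC x mt_C by blast
        have "le ?h g'" using meet_le2 gC by blast
        then have "le (mt ?h x) (mt g' x)" using meet_mono hC gC x by blast
        then have "T (mt ?h x) (mt g' x)" using T1 mt_C hC gC x by blast
        then have 2: "T (mt ?h x) w" using T2[of "mt ?h x" "mt g' x" w] gg gC hC x mt_C by blast
        have "T (mt ?h x) (mt z w)" using T3[of "mt ?h x" z w] 1 2 gg hC x mt_C by blast
        then show "mt z w \<in> Mx" unfolding Mx_def using hM gg mt_C by blast
      qed
      ultimately show ?thesis unfolding S_def by blast
    qed
    then have "Mx = M" using max sub by blast
    then show False using xMx x by blast
  qed
  have pf: "prime_filter A M"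
    unfolding prime_filter_def
  proof (intro conjI ballI impI)
    show "M \<subseteq> C" by (rule MC)
    show "tp \<in> M" using Mcl[OF aM top_C] T1 ab le_top top_C by blast
    show "bt \<notin> M"
    proof
      assume "bt \<in> M"
      then show False using Mcl[of bt b] T1 bot_le ab bot_C bM by blast
    qed
    show "y \<in> M" if "x \<in> M" "y \<in> C" "le x y" for x y using that Mcl T1 MC by blast
    show "mt x y \<in> M" if "x \<in> M" "y \<in> M" for x y using that Mmt by blast
    fix x y assume xy: "x \<in> C" "y \<in> C" "jn x y \<in> M"
    show "x \<in> M \<or> y \<in> M"
    proof (rule ccontr)
      assume "\<not> (x \<in> M \<or> y \<in> M)"
      then obtain g g' where gg: "g \<in> M" "g' \<in> M" "T (mt g x) b" "T (mt g' y) b"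
        using key xy by blast
      have gC: "g \<in> C" "g' \<in> C" using gg MC by auto
      let ?h = "mt g g'"
      have hM: "?h \<in> M" using gg Mmt by blast
      have hC: "?h \<in> C" using gC mt_C by blast
      have "le ?h g" using meet_le1 gC by blast
      then have "le (mt ?h x) (mt g x)" using meet_mono hC gC xy by blast
      then have "T (mt ?h x) (mt g x)" using T1 mt_C hC gC xy by blast
      then have 1: "T (mt ?h x) b" using T2[of "mt ?h x" "mt g x" b] gg gC hC xy ab mt_C by blast
      have "le ?h g'" using meet_le2 gC by blast
      then have "le (mt ?h y) (mt g' y)" using meet_mono hC gC xy by blast
      then have "T (mt ?h y) (mt g' y)" using T1 mt_C hC gC xy by blast
      then have 2: "T (mt ?h y) b" using T2[of "mt ?h y" "mt g' y" b] gg gC hC xy ab mt_C by blast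
      have "T (jn (mt ?h x) (mt ?h y)) b" using T4[of "mt ?h x" "mt ?h y" b] 1 2 hC xy ab mt_C by blast
      then have "T (mt ?h (jn x y)) b" using distr hC xy by simp
      moreover have "mt ?h (jn x y) \<in> M" using hM xy Mmt by blast
      ultimately show False using Mcl ab bM by blast
    qed
  qed
  show ?thesis using pf aM bM Mcl by blast
qed

lemma pfD:
  assumes "prime_filter A P"
  shows "P \<subseteq> C" "tp \<in> P" "bt \<notin> P"
    "\<And>x y. x \<in> P \<Longrightarrow> y \<in> C \<Longrightarrow> le x y \<Longrightarrow> y \<in> P"
    "\<And>x y. x \<in> P \<Longrightarrow> y \<in> P \<Longrightarrow> mt x y \<in> P"
    "\<And>x y. x \<in> C \<Longrightarrow> y \<in> C \<Longrightarrow> jn x y \<in> P \<Longrightarrow> x \<in> P \<or> y \<in> P"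
  using assms unfolding prime_filter_def by blast+

lemma pf_mt: "prime_filter A P \<Longrightarrow> x \<in> C \<Longrightarrow> y \<in> C \<Longrightarrow> mt x y \<in> P \<longleftrightarrow> x \<in> P \<and> y \<in> P"
  by (meson pfD meet_le1 meet_le2)

lemma pf_jn: "prime_filter A P \<Longrightarrow> x \<in> C \<Longrightarrow> y \<in> C \<Longrightarrow> jn x y \<in> P \<longleftrightarrow> x \<in> P \<or> y \<in> P"
  by (meson pfD join_ge1 join_ge2 jn_C)

lemma sep: "a \<in> C \<Longrightarrow> b \<in> C \<Longrightarrow> \<not> le a b \<Longrightarrow> \<exists>P. prime_filter A P \<and> a \<in> P \<and> b \<notin> P"
  using prime_ext[of le a b] le_trans le_meetI join_leI by blast

lemma imp_rep:
  assumes P: "prime_filter A P" and ab: "a \<in> C" "b \<in> C"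
  shows "im a b \<in> P \<longleftrightarrow> (\<forall>Q. (P,Q) \<in> R_A A \<longrightarrow> a \<in> Q \<longrightarrow> b \<in> Q)"
proof
  assume "im a b \<in> P"
  then show "\<forall>Q. (P,Q) \<in> R_A A \<longrightarrow> a \<in> Q \<longrightarrow> b \<in> Q" using ab unfolding R_A_def by blast
next
  assume R: "\<forall>Q. (P,Q) \<in> R_A A \<longrightarrow> a \<in> Q \<longrightarrow> b \<in> Q"
  show "im a b \<in> P"
  proof (rule ccontr)
    assume nab: "im a b \<notin> P"
    let ?T = "\<lambda>x y. im x y \<in> P"
    have T1: "\<And>x y. x\<in>C \<Longrightarrow> y\<in>C \<Longrightarrow> le x y \<Longrightarrow> ?T x y" using im_le_top pfD[OF P] by simp
    have T2: "\<And>x y z. x\<in>C \<Longrightarrow> y\<in>C \<Longrightarrow> z\<in>C \<Longrightarrow> ?T x y \<Longrightarrow> ?T y z \<Longrightarrow> ?T x z"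
      using pfD[OF P] im_tr im_C mt_C by meson
    have T3: "\<And>x y z. x\<in>C \<Longrightarrow> y\<in>C \<Longrightarrow> z\<in>C \<Longrightarrow> ?T x y \<Longrightarrow> ?T x z \<Longrightarrow> ?T x (mt y z)"
      using pfD(5)[OF P] im_mt by simp
    have T4: "\<And>x y z. x\<in>C \<Longrightarrow> y\<in>C \<Longrightarrow> z\<in>C \<Longrightarrow> ?T x z \<Longrightarrow> ?T y z \<Longrightarrow> ?T (jn x y) z"
      using pfD(5)[OF P] im_jn by simp
    obtain Q where Q: "prime_filter A Q" "a \<in> Q" "b \<notin> Q" "\<forall>x\<in>Q. \<forall>y\<in>C. ?T x y \<longrightarrow> y \<in> Q"
    proof -
      have "\<exists>Q. prime_filter A Q \<and> a \<in> Q \<and> b \<notin> Q \<and> (\<forall>x\<in>Q. \<forall>y\<in>C. ?T x y \<longrightarrow> y \<in> Q)"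
        apply (rule prime_ext[of ?T a b])
        subgoal using T1 by blast
        subgoal using T2 by blast
        subgoal using T3 by blast
        subgoal using T4 by blast
        using ab nab by blast+
      then show ?thesis using that by blast
    qed
    have "(P,Q) \<in> R_A A" unfolding R_A_def Xp_def using P Q by blast
    then show False using R Q by blast
  qed
qed

lemma coimp_rep:
  assumes P: "prime_filter A P" and ab: "a \<in> C" "b \<in> C"
  shows "co a b \<in> P \<longleftrightarrow> (\<exists>Q. (P,Q) \<in> S_A A \<and> a \<in> Q \<and> b \<notin> Q)"
proof
  assume "\<exists>Q. (P,Q) \<in> S_A A \<and> a \<in> Q \<and> b \<notin> Q"
  then show "co a b \<in> P" using ab unfolding S_A_def by blast
next
  assume nab0: "co a b \<in> P"
  let ?T = "\<lambda>x y. co x y \<notin> P"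
  have nab: "\<not> ?T a b" using nab0 by simp
  have T1: "\<And>x y. x\<in>C \<Longrightarrow> y\<in>C \<Longrightarrow> le x y \<Longrightarrow> ?T x y" using co_le_bot pfD[OF P] by simp
  have T2: "\<And>x y z. x\<in>C \<Longrightarrow> y\<in>C \<Longrightarrow> z\<in>C \<Longrightarrow> ?T x y \<Longrightarrow> ?T y z \<Longrightarrow> ?T x z"
  proof -
    fix x y z assume a: "x\<in>C" "y\<in>C" "z\<in>C" "?T x y" "?T y z"
    show "?T x z"
    proof
      assume "co x z \<in> P"
      then have "jn (co x y) (co y z) \<in> P" using pfD(4)[OF P] co_tr a co_C jn_C by meson
      then show False using pf_jn[OF P] a co_C by blast
    qed
  qed
  have T3: "\<And>x y z. x\<in>C \<Longrightarrow> y\<in>C \<Longrightarrow> z\<in>C \<Longrightarrow> ?T x y \<Longrightarrow> ?T x z \<Longrightarrow> ?T x (mt y z)"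
    using pf_jn[OF P] co_mt co_C by simp
  have T4: "\<And>x y z. x\<in>C \<Longrightarrow> y\<in>C \<Longrightarrow> z\<in>C \<Longrightarrow> ?T x z \<Longrightarrow> ?T y z \<Longrightarrow> ?T (jn x y) z"
    using pf_jn[OF P] co_jn co_C by simp
  obtain Q where Q: "prime_filter A Q" "a \<in> Q" "b \<notin> Q" "\<forall>x\<in>Q. \<forall>y\<in>C. ?T x y \<longrightarrow> y \<in> Q"
    proof -
    have "\<exists>Q. prime_filter A Q \<and> a \<in> Q \<and> b \<notin> Q \<and> (\<forall>x\<in>Q. \<forall>y\<in>C. ?T x y \<longrightarrow> y \<in> Q)"
      apply (rule prime_ext[of ?T a b])
      subgoal using T1 by blast
      subgoal using T2 by blast
      subgoal using T3 by blast
      subgoal using T4 by blast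
      using ab nab by blast+
    then show ?thesis using that by blast
  qed
  have "(P,Q) \<in> S_A A" unfolding S_A_def Xp_def using P Q by blast
  then show "\<exists>Q. (P,Q) \<in> S_A A \<and> a \<in> Q \<and> b \<notin> Q" using Q by blast
qed

lemma main: "embeds_into_complex A (\<lambda>a. {P \<in> Xp A. a \<in> P})"
  unfolding embeds_into_complex_def
proof (intro conjI ballI)
  show "inj_on (\<lambda>a. {P \<in> Xp A. a \<in> P}) C"
  proof (rule inj_onI)
    fix a b assume ab: "a \<in> C" "b \<in> C" and eq: "{P \<in> Xp A. a \<in> P} = {P \<in> Xp A. b \<in> P}"
    show "a = b"
    proof (rule ccontr)
      assume "a \<noteq> b"
      then have "\<not> le a b \<or> \<not> le b a" using le_antisym ab by blast
      then obtain P where "prime_filter A P" "(a \<in> P \<and> b \<notin> P) \<or> (b \<in> P \<and> a \<notin> P)"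
        using sep ab by blast
      then show False using eq unfolding Xp_def by blast
    qed
  qed
  show "(\<lambda>a. {P \<in> Xp A. a \<in> P}) ` C \<subseteq> Up A"
    unfolding Up_def by blast
  show "{P \<in> Xp A. bt \<in> P} = {}" using pfD(3) unfolding Xp_def by blast
  show "{P \<in> Xp A. tp \<in> P} = Xp A" using pfD(2) unfolding Xp_def by blast
  fix a b assume ab: "a \<in> C" "b \<in> C"
  show "{P \<in> Xp A. mt a b \<in> P} = {P \<in> Xp A. a \<in> P} \<inter> {P \<in> Xp A. b \<in> P}"
    using pf_mt ab unfolding Xp_def by blast
  show "{P \<in> Xp A. jn a b \<in> P} = {P \<in> Xp A. a \<in> P} \<union> {P \<in> Xp A. b \<in> P}"
    using pf_jn ab unfolding Xp_def by blast
  show "{P \<in> Xp A. im a b \<in> P} = impR A {P \<in> Xp A. a \<in> P} {P \<in> Xp A. b \<in> P}"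
    unfolding impR_def using imp_rep[OF _ ab] unfolding Xp_def R_A_def by auto
  show "{P \<in> Xp A. co a b \<in> P} = coimpS A {P \<in> Xp A. a \<in> P} {P \<in> Xp A. b \<in> P}"
    unfolding coimpS_def using coimp_rep[OF _ ab] unfolding Xp_def S_A_def by auto
qed

end

theorem theorem4p10:
  fixes A :: "'a whb"
  assumes "whb_algebra A"
  shows "\<exists>h. embeds_into_complex A h"
proof -
  interpret whbl A using assms by unfold_locales
  show ?thesis using main by blast
qed

end
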